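(* Let $H\in(0,1)$ and let $B^H$ be a fractional Brownian motion on $[0,1]$ with Hurst index $H$. Fix $n\ge1$ and let $\gamma_n$ be the maximal absolute value of the entries of the vector $\boldsymbol\Sigma_n^{-1}\mathbf{B}^H_n$. Then for all $m\ge1$ and $1\le k\le 2^{n+m-1}$, $$|\mu_n(m,k)|\le \gamma_n\cdot(2^n+1)\cdot 2^{-2(n+m)H}.$$
   Context: A fractional Brownian motion with Hurst index $H$ is a centered Gaussian process with $B^H(0)=0$ and covariance $r(s,t)=\mathbb{E}[B^H(s)B^H(t)]=\tfrac12(|s|^{2H}+|t|^{2H}-|s-t|^{2H})$. $t^n_i=i/2^n$, $\mathbf{B}^H_n=(B^H(t^n_0),\dots,B^H(t^n_{2^n}))$, $\boldsymbol\Sigma_n$ is the covariance matrix of $\mathbf{B}^H_n$ (which is singular since $B^H(0)=0$; $\boldsymbol\Sigma_n^{-1}$ denotes its generalized inverse, as in the paper). $\boldsymbol\alpha_n(m,k)=(B^H(t^{n+m}_{2k-2}),B^H(t^{n+m}_{2k-1}),B^H(t^{n+m}_{2k}))^\top$, $\boldsymbol\beta=(1/2,-1,1/2)^\top$, $\mu_n(m,k)=\boldsymbol\beta^\top\mathbb{E}[\boldsymbol\alpha_n(m,k)\mid\mathbf{B}^H_n]=\boldsymbol\beta^\top\boldsymbol\Sigma^{(m,k)}_n\boldsymbol\Sigma_n^{-1}\mathbf{B}^H_n$, where $\boldsymbol\Sigma^{(m,k)}_n$ is the $3\times(2^n+1)$ cross-covariance matrix of $\boldsymbol\alpha_n(m,k)$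 and $\mathbf{B}^H_n$. *)

theory Defs
  imports "HOL-Probability.Probability"
begin

definition fbm_cov :: "real \<Rightarrow> real \<Rightarrow> real \<Rightarrow> real" where
  "fbm_cov H s t = (\<bar>s\<bar> powr (2*H) + \<bar>t\<bar> powr (2*H) - \<bar>s - t\<bar> powr (2*H)) / 2"

text \<open>B is a fractional Brownian motion on [0,1] with Hurst index H on the probability
  space M: a centered Gaussian process (every finite linear combination of its values is
  either a.s. zero or centered normal with positive variance), with B(0) = 0 a.s. and
  covariance fbm_cov H.\<close>
definition is_fbm :: "'a measure \<Rightarrow> real \<Rightarrow> (real \<Rightarrow> 'a \<Rightarrow> real) \<Rightarrow> bool" where
  "is_fbm M H B \<longleftrightarrow>
     prob_space M \<and>
     (\<forall>t\<in>{0..1}. B t \<in> borel_measurable M) \<and>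
     (AE \<omega> in M. B 0 \<omega> = 0) \<and>
     (\<forall>t\<in>{0..1}. integrable M (B t) \<and> integral\<^sup>L M (B t) = 0) \<and>
     (\<forall>s\<in>{0..1}. \<forall>t\<in>{0..1}. integrable M (\<lambda>\<omega>. B s \<omega> * B t \<omega>) \<and>
          integral\<^sup>L M (\<lambda>\<omega>. B s \<omega> * B t \<omega>) = fbm_cov H s t) \<and>
     (\<forall>(ts :: real list) (cs :: real list). set ts \<subseteq> {0..1} \<longrightarrow> length cs = length ts \<longrightarrow>
        (let X = (\<lambda>\<omega>. \<Sum>i<length ts. cs ! i * B (ts ! i) \<omega>) in
          (AE \<omega> in M. X \<omega> = 0) \<or>
          (\<exists>\<sigma>>0. distributed M lborel X (\<lambda>x. ennreal (normal_density 0 \<sigma> x)))))"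

definition dyad :: "nat \<Rightarrow> nat \<Rightarrow> real" where
  "dyad n i = real i / 2 ^ n"

definition Sigma_n :: "real \<Rightarrow> nat \<Rightarrow> nat \<Rightarrow> nat \<Rightarrow> real" where
  "Sigma_n H n i j = fbm_cov H (dyad n i) (dyad n j)"

definition mat_mul :: "nat \<Rightarrow> (nat \<Rightarrow> nat \<Rightarrow> real) \<Rightarrow> (nat \<Rightarrow> nat \<Rightarrow> real) \<Rightarrow> nat \<Rightarrow> nat \<Rightarrow> real" where
  "mat_mul N A C i j = (\<Sum>l\<in>{0..N}. A i l * C l j)"

definition is_pinv :: "nat \<Rightarrow> (nat \<Rightarrow> nat \<Rightarrow> real) \<Rightarrow> (nat \<Rightarrow> nat \<Rightarrow> real) \<Rightarrow> bool" where
  "is_pinv N A G \<longleftrightarrow>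
     (\<forall>i\<in>{0..N}. \<forall>j\<in>{0..N}.
        mat_mul N (mat_mul N A G) A i j = A i j \<and>
        mat_mul N (mat_mul N G A) G i j = G i j \<and>
        mat_mul N A G i j = mat_mul N A G j i \<and>
        mat_mul N G A i j = mat_mul N G A j i)"

definition SinvB :: "nat \<Rightarrow> (nat \<Rightarrow> nat \<Rightarrow> real) \<Rightarrow> (real \<Rightarrow> 'a \<Rightarrow> real) \<Rightarrow> 'a \<Rightarrow> nat \<Rightarrow> real" where
  "SinvB n G B \<omega> j = (\<Sum>l\<in>{0..2^n}. G j l * B (dyad n l) \<omega>)"

definition gamma_n :: "nat \<Rightarrow> (nat \<Rightarrow> nat \<Rightarrow> real) \<Rightarrow> (real \<Rightarrow> 'a \<Rightarrow> real) \<Rightarrow> 'a \<Rightarrow> real" where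
  "gamma_n n G B \<omega> = Max ((\<lambda>j. \<bar>SinvB n G B \<omega> j\<bar>) ` {0..2^n})"

definition beta :: "nat \<Rightarrow> real" where
  "beta a = (if a = 1 then -1 else 1/2)"

text \<open>mu_n(m,k) = beta^T Sigma^{(m,k)}_n Sigma_n^{-1} B^H_n, where row a (a = 0,1,2) of the
  cross-covariance matrix Sigma^{(m,k)}_n has entries r(t^{n+m}_{2k-2+a}, t^n_j).\<close>
definition mu_n :: "real \<Rightarrow> nat \<Rightarrow> (nat \<Rightarrow> nat \<Rightarrow> real) \<Rightarrow> (real \<Rightarrow> 'a \<Rightarrow> real) \<Rightarrow> nat \<Rightarrow> nat \<Rightarrow> 'a \<Rightarrow> real" where
  "mu_n H n G B m k \<omega> =
     (\<Sum>a\<in>{0..2::nat}. beta a *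
        (\<Sum>j\<in>{0..2^n}. fbm_cov H (dyad (n+m) (2*k - 2 + a)) (dyad n j) * SinvB n G B \<omega> j))"

end

theory Submission
  imports Defs
begin

lemma powr_concave:
  assumes "0 < q" "q \<le> 1" shows "concave_on {0<..} (\<lambda>x::real. x powr q)"
proof (rule f''_le0_imp_concave[where f'="\<lambda>x. q * x powr (q-1)" and f''="\<lambda>x. q * ((q-1) * x powr (q-1-1))"])
  show "convex {0::real<..}" by simp
  fix x :: real assume x: "x \<in> {0<..}"
  then show "((\<lambda>x. x powr q) has_real_derivative q * x powr (q-1)) (at x)"
    by (auto intro!: derivative_eq_intros)
  show "((\<lambda>x. q * x powr (q-1)) has_real_derivative q * ((q-1) * x powr (q-1-1))) (at x)"
    using x by (auto intro!: derivative_eq_intros)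
  show "q * ((q-1) * x powr (q-1-1)) \<le> 0"
  proof -
    have "q - 1 \<le> 0" using assms by simp
    have h2: "(q-1) * x powr (q-1-1) \<le> 0" by (rule mult_nonpos_nonneg[OF \<open>q - 1 \<le> 0\<close> powr_ge_zero])
    have "0 \<le> q" using assms by simp
    show ?thesis by (rule mult_nonneg_nonpos[OF \<open>0 \<le> q\<close> h2])
  qed
qed

lemma powr_subadd:
  fixes a b q :: real
  assumes "0 < q" "q \<le> 1" "0 \<le> a" "0 \<le> b"
  shows "(a + b) powr q \<le> a powr q + b powr q"
proof (cases "a + b = 0")
  case True then show ?thesis using assms by simp
next
  case False
  then have s: "a + b > 0" using assms by simp
  have "a powr q = (a+b) powr q * (a/(a+b)) powr q"
    using s assms by (simp add: powr_divide)
  moreover have "(a/(a+b)) powr q \<ge> (a/(a+b)) powr 1"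
    using assms s by (intro powr_mono') (auto simp: divide_simps)
  ultimately have 1: "a powr q \<ge> (a+b) powr q * (a/(a+b))"
    using s assms by (metis mult_left_mono powr_ge_zero powr_one_gt_zero_iff divide_nonneg_pos)
  have "b powr q = (a+b) powr q * (b/(a+b)) powr q"
    using s assms by (simp add: powr_divide)
  moreover have "(b/(a+b)) powr q \<ge> (b/(a+b)) powr 1"
    using assms s by (intro powr_mono') (auto simp: divide_simps)
  ultimately have 2: "b powr q \<ge> (a+b) powr q * (b/(a+b))"
    using s assms by (metis mult_left_mono powr_ge_zero powr_one_gt_zero_iff divide_nonneg_pos)
  have "a/(a+b) + b/(a+b) = 1" using s by (simp add: add_divide_distrib[symmetric])
  then have "(a+b) powr q * (a/(a+b)) + (a+b) powr q * (b/(a+b)) = (a+b) powr q"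
    by (metis distrib_left mult.right_neutral)
  then show ?thesis using 1 2 by linarith
qed

lemma powr_diff_le:
  fixes a b q :: real
  assumes "0 < q" "q \<le> 1" "0 \<le> a" "0 \<le> b"
  shows "\<bar>a powr q - b powr q\<bar> \<le> \<bar>a - b\<bar> powr q"
proof (cases "a \<le> b")
  case True
  have "b powr q \<le> a powr q + (b - a) powr q" using powr_subadd[of q a "b-a"] assms True by simp
  moreover have "a powr q \<le> b powr q" using True assms by (simp add: powr_mono2)
  ultimately show ?thesis using True by simp
next
  case False
  have "a powr q \<le> b powr q + (a - b) powr q" using powr_subadd[of q b "a-b"] assms False by simp
  moreover have "b powr q \<le> a powr q" using False assms by (simp add: powr_mono2)
  ultimately show ?thesis using False by simp
qed

definition Dfun :: "real \<Rightarrow> real \<Rightarrow> real" where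
  "Dfun p u = \<bar>u-1\<bar> powr p / 2 - \<bar>u\<bar> powr p + \<bar>u+1\<bar> powr p / 2"

lemma Dfun_even: "Dfun p (-u) = Dfun p u"
  unfolding Dfun_def by (simp add: abs_minus_commute add.commute)

lemma Dfun_small:
  assumes "0 < p" "p \<le> 1"
  shows "-1 \<le> Dfun p u \<and> Dfun p u \<le> 1"
proof -
  have 1: "\<bar>\<bar>u-1\<bar> powr p - \<bar>u\<bar> powr p\<bar> \<le> 1"
  proof -
    have "\<bar>\<bar>u-1\<bar> powr p - \<bar>u\<bar> powr p\<bar> \<le> \<bar>\<bar>u-1\<bar> - \<bar>u\<bar>\<bar> powr p"
      using assms by (intro powr_diff_le) auto
    also have "\<dots> \<le> 1 powr p" using assms by (intro powr_mono2) auto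
    finally show ?thesis by simp
  qed
  have 2: "\<bar>\<bar>u+1\<bar> powr p - \<bar>u\<bar> powr p\<bar> \<le> 1"
  proof -
    have "\<bar>\<bar>u+1\<bar> powr p - \<bar>u\<bar> powr p\<bar> \<le> \<bar>\<bar>u+1\<bar> - \<bar>u\<bar>\<bar> powr p"
      using assms by (intro powr_diff_le) auto
    also have "\<dots> \<le> 1 powr p" using assms by (intro powr_mono2) auto
    finally show ?thesis by simp
  qed
  show ?thesis using 1 2 unfolding Dfun_def by (auto simp: abs_le_iff)
qed

lemma powr_split:
  fixes t q :: real
  assumes "0 \<le> t" shows "t powr (1 + q) = t * t powr q"
  using powr_mult_base[OF assms] by simp

lemma Dfun_big_pos:
  assumes "1 < p" "p < 2" "0 \<le> u"
  shows "0 \<le> Dfun p u \<and> Dfun p u \<le> 2"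
proof (cases "1 \<le> u")
  case True
  have lo: "0 \<le> Dfun p u"
  proof (cases "u = 1")
    case True
    have "2 powr 1 \<le> 2 powr p" using assms by (intro powr_mono) auto
    then show ?thesis using True unfolding Dfun_def by simp
  next
    case False
    then have "u > 1" using \<open>1 \<le> u\<close> by simp
    have "(\<lambda>x. x powr p) ((1 - 1/2) *\<^sub>R (u-1) + (1/2) *\<^sub>R (u+1)) \<le> (1-1/2) * (u-1) powr p + (1/2) * (u+1) powr p"
      using \<open>u > 1\<close> assms by (intro convex_onD[OF powr_convex]) auto
    moreover have "(1 - 1/2) *\<^sub>R (u-1) + (1/2) *\<^sub>R (u+1) = u" by (simp add: field_simps)
    ultimately show ?thesis using \<open>u > 1\<close> unfolding Dfun_def by simp
  qed
  define q where "q = p - 1"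
  have q: "0 < q" "q < 1" using assms q_def by auto
  have pq: "p = 1 + q" using q_def by simp
  have mid: "(u-1) powr q + (u+1) powr q \<le> 2 * u powr q"
  proof (cases "u = 1")
    case True
    have "2 powr q \<le> 2 powr 1" using q by (intro powr_mono) auto
    then show ?thesis using True by simp
  next
    case False
    then have "u > 1" using \<open>1 \<le> u\<close> by simp
    have "(1-1/2) * (u-1) powr q + (1/2) * (u+1) powr q \<le> (\<lambda>x. x powr q) ((1 - 1/2) *\<^sub>R (u-1) + (1/2) *\<^sub>R (u+1))"
      using \<open>u > 1\<close> q by (intro concave_onD[OF powr_concave]) auto
    moreover have "(1 - 1/2) *\<^sub>R (u-1) + (1/2) *\<^sub>R (u+1) = u" by (simp add: field_simps)
    ultimately show ?thesis by simp
  qed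
  have dif: "(u+1) powr q - (u-1) powr q \<le> 2"
  proof -
    have "\<bar>(u+1) powr q - (u-1) powr q\<bar> \<le> \<bar>(u+1) - (u-1)\<bar> powr q"
      using q True by (intro powr_diff_le) auto
    also have "\<dots> = 2 powr q" by simp
    also have "\<dots> \<le> 2 powr 1" using q by (intro powr_mono) auto
    finally show ?thesis by simp
  qed
  have e: "2 * Dfun p u = u * ((u-1) powr q - 2 * u powr q + (u+1) powr q) + ((u+1) powr q - (u-1) powr q)"
  proof -
    have ab: "\<bar>u-1\<bar> = u-1" "\<bar>u\<bar> = u" "\<bar>u+1\<bar> = u+1" using True by auto
    show ?thesis unfolding Dfun_def pq ab using True
      by (simp add: powr_split field_simps)
  qed
  have "u * ((u-1) powr q - 2 * u powr q + (u+1) powr q) \<le> 0"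
    using mid True by (intro mult_nonneg_nonpos) auto
  then have "Dfun p u \<le> 2" using e dif by linarith
  then show ?thesis using lo by simp
next
  case False
  then have u1: "u < 1" by simp
  have a: "u powr p \<le> u powr 1" using assms u1 by (intro powr_mono') auto
  have b: "(1+u) powr 1 \<le> (1+u) powr p" using assms by (intro powr_mono) auto
  have c: "0 \<le> (1-u) powr p" by simp
  have d: "(1-u) powr p \<le> 1 powr p" using assms u1 by (intro powr_mono2) auto
  have e: "(1+u) powr p \<le> (1+u) powr 2" using assms by (intro powr_mono) auto
  have f: "u powr 2 \<le> u powr p" using assms u1 by (intro powr_mono') auto
  have g: "(1+u) powr 2 = (1+u)^2" "u powr 2 = u^2" using assms by auto
  have h: "\<bar>u-1\<bar> = 1-u" "\<bar>u\<bar> = u" "\<bar>u+1\<bar> = 1+u" using assms u1 by auto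
  have D: "Dfun p u = (1-u) powr p / 2 - u powr p + (1+u) powr p / 2"
    unfolding Dfun_def h by simp
  have a': "u powr p \<le> u" using a assms by simp
  have b': "1 + u \<le> (1+u) powr p" using b assms by simp
  have sq: "(1+u)^2 - 2*u^2 = 2 - (1-u)^2" by (simp add: power2_eq_square algebra_simps)
  have sq0: "0 \<le> (1-u)^2" by simp
  have lo: "0 \<le> Dfun p u" unfolding D using a' b' c u1 by linarith
  have d': "(1-u) powr p \<le> 1" using d by simp
  have e': "(1+u) powr p \<le> (1+u)^2" using e g by simp
  have f': "u^2 \<le> u powr p" using f g by simp
  have hi: "Dfun p u \<le> 2" unfolding D using d' e' f' sq sq0 by linarith
  show ?thesis using lo hi by simp
qed

lemma Dfun_big:
  assumes "1 < p" "p < 2"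
  shows "0 \<le> Dfun p u \<and> Dfun p u \<le> 2"
proof (cases "0 \<le> u")
  case True then show ?thesis using Dfun_big_pos assms by blast
next
  case False then show ?thesis using Dfun_big_pos[of p "-u"] assms Dfun_even[of p u] by auto
qed

lemma Dfun_diff:
  assumes "0 < p" "p < 2"
  shows "\<bar>Dfun p u - Dfun p v\<bar> \<le> 2"
proof (cases "p \<le> 1")
  case True then show ?thesis using Dfun_small[of p u] Dfun_small[of p v] assms by auto
next
  case False then show ?thesis using Dfun_big[of p u] Dfun_big[of p v] assms by auto
qed


lemma key:
  fixes H x h s :: real
  assumes "0 < H" "H < 1" "0 < h"
  shows "\<bar>1/2 * fbm_cov H (x-h) s - fbm_cov H x s + 1/2 * fbm_cov H (x+h) s\<bar> \<le> h powr (2*H)"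
proof -
  define p where "p = 2*H"
  have p: "0 < p" "p < 2" using assms p_def by auto
  have sc: "\<And>t. \<bar>h*t\<bar> powr p = h powr p * \<bar>t\<bar> powr p"
    using assms by (simp add: abs_mult powr_mult)
  define a1 where "a1 = x/h"
  define a2 where "a2 = (x-s)/h"
  have e1: "x - h = h*(a1-1)" "x = h*a1" "x + h = h*(a1+1)"
    "x - h - s = h*(a2-1)" "x - s = h*a2" "x + h - s = h*(a2+1)"
    using assms unfolding a1_def a2_def by (auto simp: field_simps)
  have eq: "1/2 * fbm_cov H (x-h) s - fbm_cov H x s + 1/2 * fbm_cov H (x+h) s
      = h powr p * (Dfun p a1 - Dfun p a2) / 2"
  proof -
    have f1: "\<bar>x - h\<bar> powr p = h powr p * \<bar>a1-1\<bar> powr p" by (subst e1(1), rule sc)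
    have f2: "\<bar>x\<bar> powr p = h powr p * \<bar>a1\<bar> powr p" by (subst e1(2), rule sc)
    have f3: "\<bar>x + h\<bar> powr p = h powr p * \<bar>a1+1\<bar> powr p" by (subst e1(3), rule sc)
    have f4: "\<bar>x - h - s\<bar> powr p = h powr p * \<bar>a2-1\<bar> powr p" by (subst e1(4), rule sc)
    have f5: "\<bar>x - s\<bar> powr p = h powr p * \<bar>a2\<bar> powr p" by (subst e1(5), rule sc)
    have f6: "\<bar>x + h - s\<bar> powr p = h powr p * \<bar>a2+1\<bar> powr p" by (subst e1(6), rule sc)
    note f = f1 f2 f3 f4 f5 f6
    show ?thesis unfolding fbm_cov_def Dfun_def p_def[symmetric] f
      by (simp add: field_simps)
  qed
  have "\<bar>1/2 * fbm_cov H (x-h) s - fbm_cov H x s + 1/2 * fbm_cov H (x+h) s\<bar>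
      = h powr p * \<bar>Dfun p a1 - Dfun p a2\<bar> / 2"
    unfolding eq by (simp only: abs_divide abs_mult abs_of_nonneg[OF powr_ge_zero])
  also have "\<dots> \<le> h powr p * 2 / 2"
    using Dfun_diff[OF p] by (intro divide_right_mono mult_left_mono) auto
  finally show ?thesis unfolding p_def by simp
qed


theorem lemma7:
  fixes M :: "'a measure" and H :: real and B :: "real \<Rightarrow> 'a \<Rightarrow> real"
    and n :: nat and G :: "nat \<Rightarrow> nat \<Rightarrow> real"
  assumes "0 < H" "H < 1"
    and "is_fbm M H B"
    and "n \<ge> 1"
    and "is_pinv (2^n) (Sigma_n H n) G"
  shows "\<forall>\<omega>\<in>space M. \<forall>m k. m \<ge> 1 \<longrightarrow> 1 \<le> k \<longrightarrow> k \<le> 2^(n+m-1) \<longrightarrow>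
           \<bar>mu_n H n G B m k \<omega>\<bar> \<le> gamma_n n G B \<omega> * (2^n + 1) * 2 powr (-2 * real (n+m) * H)"
proof (intro ballI allI impI)
  fix \<omega> and m k :: nat
  assume k: "1 \<le> k"
  define N where "N = n + m"
  define h :: real where "h = 1 / 2^N"
  define x :: real where "x = (2 * real k - 1) * h"
  have hpos: "0 < h" unfolding h_def by simp
  have dy: "dyad N (2*k-2+a) = x + (real a - 1) * h" for a
  proof -
    have "real (2*k-2+a) = 2 * real k - 2 + real a" using k by (simp add: of_nat_diff)
    then show ?thesis unfolding dyad_def x_def h_def by (simp add: field_simps)
  qed
  have d0: "dyad N (2*k-2) = x - h" using dy[of 0] by simp
  have d1: "dyad N (2*k-2+1) = x" using dy[of 1] by simp
  have d2: "dyad N (2*k-2+2) = x + h" using dy[of 2] by simp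
  define c where "c j = (\<Sum>a\<in>{0..2::nat}. beta a * fbm_cov H (dyad N (2*k-2+a)) (dyad n j))" for j
  have ceq: "c j = 1/2 * fbm_cov H (x-h) (dyad n j) - fbm_cov H x (dyad n j) + 1/2 * fbm_cov H (x+h) (dyad n j)" for j
  proof -
    have "{0..2::nat} = {0,1,2}" by auto
    then show ?thesis unfolding c_def using d0 d1 d2 by (simp add: beta_def)
  qed
  have cb: "\<bar>c j\<bar> \<le> h powr (2*H)" for j
    unfolding ceq using key[OF assms(1,2) hpos] .
  define v where "v j = SinvB n G B \<omega> j" for j
  have mueq: "mu_n H n G B m k \<omega> = (\<Sum>j\<in>{0..2^n}. c j * v j)"
  proof -
    have "mu_n H n G B m k \<omega> = (\<Sum>a\<in>{0..2::nat}. \<Sum>j\<in>{0..2^n}. beta a * (fbm_cov H (dyad N (2*k-2+a)) (dyad n j) * v j))"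
      unfolding mu_n_def N_def v_def by (simp add: sum_distrib_left)
    also have "\<dots> = (\<Sum>j\<in>{0..2^n}. \<Sum>a\<in>{0..2::nat}. beta a * (fbm_cov H (dyad N (2*k-2+a)) (dyad n j) * v j))"
      by (rule sum.swap)
    also have "\<dots> = (\<Sum>j\<in>{0..2^n}. c j * v j)"
      unfolding c_def by (simp add: sum_distrib_right mult.assoc)
    finally show ?thesis .
  qed
  have vb: "\<bar>v j\<bar> \<le> gamma_n n G B \<omega>" if "j \<in> {0..2^n}" for j
    unfolding gamma_n_def v_def using that by (intro Max_ge) auto
  have "\<bar>mu_n H n G B m k \<omega>\<bar> \<le> (\<Sum>j\<in>{0..2^n}. \<bar>c j * v j\<bar>)"
    unfolding mueq by (rule sum_abs)
  also have "\<dots> \<le> (\<Sum>j\<in>{0..(2::nat)^n}. h powr (2*H) * gamma_n n G B \<omega>)"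
    using cb vb by (intro sum_mono) (simp add: abs_mult mult_mono)
  also have "\<dots> = gamma_n n G B \<omega> * (2^n + 1) * h powr (2*H)" by simp
  also have "h powr (2*H) = 2 powr (-2 * real (n+m) * H)"
  proof -
    have "h = 2 powr (- real N)" unfolding h_def by (simp add: powr_minus_divide powr_realpow)
    then have "h powr (2*H) = 2 powr (- real N * (2*H))" by (simp add: powr_powr)
    also have "- real N * (2*H) = -2 * real (n+m) * H" unfolding N_def by (simp add: algebra_simps)
    finally show ?thesis .
  qed
  finally show "\<bar>mu_n H n G B m k \<omega>\<bar> \<le> gamma_n n G B \<omega> * (2^n + 1) * 2 powr (-2 * real (n+m) * H)" .
qed

end
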